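(* Let $d, d_0$ be metrics on a set $E$ such that $d$ takes values in $\lambda \mathbb{Z}$ and $d_0$ takes values in $[0,\lambda)$ for some real $\lambda > 0$. Then $d+d_0$ is a metric on $E$ refining $d$. In particular, if $d$ takes integer values, then $d + d'_{\flat}$ is a metric refining $d$ for any metric $d'$ on $E$, where $d'_\flat = d'/(1+d')$.
   Context: Metrics on $E$ are regarded as functions on the Cartesian product $E \times E$. For functions $f,f'\colon E\times E \to \mathbb{R}$, $f'$ refines $f$ if for all pairs $(x_1,x_2),(x_1',x_2') \in E\times E$ that agree in at least one coordinate, $f(x_1,x_2) < f(x_1',x_2')$ implies $f'(x_1,x_2) < f'(x_1',x_2')$. *)

theory Defs
  imports Complex_Main
begin

definition is_metric_on :: "'a set \<Rightarrow> ('a \<Rightarrow> 'a \<Rightarrow> real) \<Rightarrow> bool" where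
  "is_metric_on E d \<longleftrightarrow>
     (\<forall>x\<in>E. \<forall>y\<in>E. 0 \<le> d x y) \<and>
     (\<forall>x\<in>E. \<forall>y\<in>E. d x y = 0 \<longleftrightarrow> x = y) \<and>
     (\<forall>x\<in>E. \<forall>y\<in>E. d x y = d y x) \<and>
     (\<forall>x\<in>E. \<forall>y\<in>E. \<forall>z\<in>E. d x z \<le> d x y + d y z)"

definition refines_on :: "'a set \<Rightarrow> ('a \<Rightarrow> 'a \<Rightarrow> real) \<Rightarrow> ('a \<Rightarrow> 'a \<Rightarrow> real) \<Rightarrow> bool" where
  "refines_on E f' f \<longleftrightarrow>
     (\<forall>x1\<in>E. \<forall>x2\<in>E. \<forall>y1\<in>E. \<forall>y2\<in>E. (x1 = y1 \<or> x2 = y2) \<longrightarrow>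
        f x1 x2 < f y1 y2 \<longrightarrow> f' x1 x2 < f' y1 y2)"

end

theory Submission
  imports Defs
begin

lemma part1:
  assumes "is_metric_on E d" "is_metric_on E d0" "lam > 0"
    "\<forall>x\<in>E. \<forall>y\<in>E. \<exists>k::int. d x y = lam * of_int k"
    "\<forall>x\<in>E. \<forall>y\<in>E. 0 \<le> d0 x y \<and> d0 x y < lam"
  shows "is_metric_on E (\<lambda>x y. d x y + d0 x y) \<and> refines_on E (\<lambda>x y. d x y + d0 x y) d"
proof
  show "is_metric_on E (\<lambda>x y. d x y + d0 x y)"
  proof -
    have A: "\<forall>x\<in>E. \<forall>y\<in>E. 0 \<le> d x y" "\<forall>x\<in>E. \<forall>y\<in>E. d x y = 0 \<longleftrightarrow> x = y"
      "\<forall>x\<in>E. \<forall>y\<in>E. d x y = d y x" "\<forall>x\<in>E. \<forall>y\<in>E. \<forall>z\<in>E. d x z \<le> d x y + d y z"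
      using assms(1) unfolding is_metric_on_def by blast+
    have B: "\<forall>x\<in>E. \<forall>y\<in>E. 0 \<le> d0 x y" "\<forall>x\<in>E. \<forall>y\<in>E. d0 x y = 0 \<longleftrightarrow> x = y"
      "\<forall>x\<in>E. \<forall>y\<in>E. d0 x y = d0 y x" "\<forall>x\<in>E. \<forall>y\<in>E. \<forall>z\<in>E. d0 x z \<le> d0 x y + d0 y z"
      using assms(2) unfolding is_metric_on_def by blast+
    show ?thesis unfolding is_metric_on_def
    proof (intro conjI ballI)
      fix x y assume "x \<in> E" "y \<in> E"
      then show "0 \<le> d x y + d0 x y" "d x y + d0 x y = d y x + d0 y x"
        using A(1,3) B(1,3) by (simp_all add: add_nonneg_nonneg)
      show "(d x y + d0 x y = 0) = (x = y)"
      proof -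
        have "0 \<le> d x y" "0 \<le> d0 x y" "(d x y = 0) = (x = y)" "(d0 x y = 0) = (x = y)"
          using A(1,2) B(1,2) \<open>x \<in> E\<close> \<open>y \<in> E\<close> by blast+
        then show ?thesis by linarith
      qed
    next
      fix x y z assume "x \<in> E" "y \<in> E" "z \<in> E"
      then show "d x z + d0 x z \<le> d x y + d0 x y + (d y z + d0 y z)"
      proof -
        have "d x z \<le> d x y + d y z" "d0 x z \<le> d0 x y + d0 y z"
          using A(4) B(4) \<open>x \<in> E\<close> \<open>y \<in> E\<close> \<open>z \<in> E\<close> by blast+
        then show ?thesis by linarith
      qed
    qed
  qed
next
  show "refines_on E (\<lambda>x y. d x y + d0 x y) d"
    unfolding refines_on_def
  proof (intro ballI impI)
    fix x1 x2 y1 y2 assume m: "x1 \<in> E" "x2 \<in> E" "y1 \<in> E" "y2 \<in> E"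
      and lt: "d x1 x2 < d y1 y2"
    obtain k1 :: int where k1: "d x1 x2 = lam * k1" using assms(4) m by blast
    obtain k2 :: int where k2: "d y1 y2 = lam * k2" using assms(4) m by blast
    have "k1 < k2" using lt k1 k2 assms(3) by (simp add: mult_less_cancel_left_pos)
    hence "k1 + 1 \<le> k2" by simp
    hence "real_of_int k1 + 1 \<le> real_of_int k2" by linarith
    hence "lam * (real_of_int k1 + 1) \<le> lam * k2" using assms(3) by simp
    hence gap: "d x1 x2 + lam \<le> d y1 y2" using k1 k2 by (simp add: algebra_simps)
    have "d0 x1 x2 < lam" "0 \<le> d0 y1 y2" using assms(5) m by auto
    thus "d x1 x2 + d0 x1 x2 < d y1 y2 + d0 y1 y2" using gap by linarith
  qed
qed

lemma flat_mono: "0 \<le> (a::real) \<Longrightarrow> a \<le> b \<Longrightarrow> a / (1 + a) \<le> b / (1 + b)"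
  by (simp add: divide_simps algebra_simps)

lemma flat_sub: assumes "0 \<le> (a::real)" "0 \<le> b" shows "(a + b) / (1 + (a + b)) \<le> a / (1 + a) + b / (1 + b)"
proof -
  have "(a + b) / (1 + (a + b)) = a / (1 + (a + b)) + b / (1 + (a + b))" by (simp add: add_divide_distrib)
  also have "a / (1 + (a + b)) \<le> a / (1 + a)" using assms by (intro divide_left_mono) auto
  also have "b / (1 + (a + b)) \<le> b / (1 + b)" using assms by (intro divide_left_mono) auto
  finally show ?thesis by simp
qed

lemma flat_metric:
  assumes "is_metric_on E d'"
  shows "is_metric_on E (\<lambda>x y. d' x y / (1 + d' x y))"
proof -
  have nn: "\<forall>x\<in>E. \<forall>y\<in>E. 0 \<le> d' x y" using assms unfolding is_metric_on_def by blast
  have tri: "d' x z / (1 + d' x z) \<le> d' x y / (1 + d' x y) + d' y z / (1 + d' y z)"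
    if "x \<in> E" "y \<in> E" "z \<in> E" for x y z
  proof -
    have "d' x z \<le> d' x y + d' y z" using assms that unfolding is_metric_on_def by blast
    hence "d' x z / (1 + d' x z) \<le> (d' x y + d' y z) / (1 + (d' x y + d' y z))"
      using flat_mono nn that by blast
    also have "\<dots> \<le> d' x y / (1 + d' x y) + d' y z / (1 + d' y z)"
      using flat_sub nn that by blast
    finally show ?thesis .
  qed
  have A: "\<forall>x\<in>E. \<forall>y\<in>E. d' x y = 0 \<longleftrightarrow> x = y"
      "\<forall>x\<in>E. \<forall>y\<in>E. d' x y = d' y x"
      using assms unfolding is_metric_on_def by blast+
  have z: "(t / (1 + t) = 0) = (t = 0)" if "0 \<le> t" for t :: real
    using that by (simp add: divide_simps)
  show ?thesis unfolding is_metric_on_def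
  proof (intro conjI ballI)
    fix x y assume xy: "x \<in> E" "y \<in> E"
    then have "0 \<le> d' x y" using nn by blast
    then show "0 \<le> d' x y / (1 + d' x y)" by simp
    show "(d' x y / (1 + d' x y) = 0) = (x = y)" using z[OF \<open>0 \<le> d' x y\<close>] A(1) xy by blast
    show "d' x y / (1 + d' x y) = d' y x / (1 + d' y x)" using A(2) xy by metis
  next
    fix x y z assume "x \<in> E" "y \<in> E" "z \<in> E"
    then show "d' x z / (1 + d' x z) \<le> d' x y / (1 + d' x y) + d' y z / (1 + d' y z)"
      by (rule tri)
  qed
qed

theorem proposition4:
  fixes E :: "'a set" and d d0 d' :: "'a \<Rightarrow> 'a \<Rightarrow> real" and lam :: real
  shows
   "(is_metric_on E d \<and> is_metric_on E d0 \<and> lam > 0 \<and>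
     (\<forall>x\<in>E. \<forall>y\<in>E. \<exists>k::int. d x y = lam * of_int k) \<and>
     (\<forall>x\<in>E. \<forall>y\<in>E. 0 \<le> d0 x y \<and> d0 x y < lam)
     \<longrightarrow> is_metric_on E (\<lambda>x y. d x y + d0 x y) \<and>
         refines_on E (\<lambda>x y. d x y + d0 x y) d)
    \<and>
    (is_metric_on E d \<and> (\<forall>x\<in>E. \<forall>y\<in>E. d x y \<in> \<int>) \<and> is_metric_on E d'
     \<longrightarrow> is_metric_on E (\<lambda>x y. d x y + d' x y / (1 + d' x y)) \<and>
         refines_on E (\<lambda>x y. d x y + d' x y / (1 + d' x y)) d)"
proof (intro conjI impI)
  assume a: "is_metric_on E d \<and> is_metric_on E d0 \<and> lam > 0 \<and>
     (\<forall>x\<in>E. \<forall>y\<in>E. \<exists>k::int. d x y = lam * of_int k) \<and>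
     (\<forall>x\<in>E. \<forall>y\<in>E. 0 \<le> d0 x y \<and> d0 x y < lam)"
  then show "is_metric_on E (\<lambda>x y. d x y + d0 x y)" "refines_on E (\<lambda>x y. d x y + d0 x y) d"
    using part1 by blast+
next
  assume a: "is_metric_on E d \<and> (\<forall>x\<in>E. \<forall>y\<in>E. d x y \<in> \<int>) \<and> is_metric_on E d'"
  have m: "is_metric_on E (\<lambda>x y. d' x y / (1 + d' x y))" using a flat_metric by blast
  have nn: "\<forall>x\<in>E. \<forall>y\<in>E. 0 \<le> d' x y" using a unfolding is_metric_on_def by blast
  have r: "\<forall>x\<in>E. \<forall>y\<in>E. 0 \<le> d' x y / (1 + d' x y) \<and> d' x y / (1 + d' x y) < 1"
  proof (intro ballI)
    fix x y assume "x \<in> E" "y \<in> E"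
    then have "0 \<le> d' x y" using nn by blast
    then show "0 \<le> d' x y / (1 + d' x y) \<and> d' x y / (1 + d' x y) < 1" by (simp add: divide_simps)
  qed
  have k: "\<forall>x\<in>E. \<forall>y\<in>E. \<exists>k::int. d x y = 1 * of_int k"
  proof (intro ballI)
    fix x y assume "x \<in> E" "y \<in> E"
    then have "d x y \<in> \<int>" using a by blast
    then obtain k where "d x y = of_int k" by (rule Ints_cases)
    then show "\<exists>k::int. d x y = 1 * of_int k" by simp
  qed
  have "is_metric_on E (\<lambda>x y. d x y + d' x y / (1 + d' x y)) \<and>
         refines_on E (\<lambda>x y. d x y + d' x y / (1 + d' x y)) d"
    using part1[OF conjunct1[OF a] m _ k r] by (simp only: zero_less_one simp_thms)
  then show "is_metric_on E (\<lambda>x y. d x y + d' x y / (1 + d' x y))"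
    "refines_on E (\<lambda>x y. d x y + d' x y / (1 + d' x y)) d" by blast+
qed

end
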